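(* Let $\varepsilon>0$, $\Omega\subset\mathbb{R}^2$ bounded open, $u\in\mathcal{SF}_\varepsilon(\Omega)$, $R\in\mathcal{R}_\varepsilon(u)$ and $T\in\mathcal{T}_\varepsilon$ with $T\subset R$. Then: (a) if $T$ has exactly one edge in $\mathcal{N}_\varepsilon(u)$, then $T$ contains at least one boundary edge of $R$; (b) if $T$ has exactly one edge in $\mathcal{N}_\varepsilon(u)$ and $u(\mathcal{L}_\varepsilon(R))$ contains four points, then $T$ contains two boundary edges of $R$.
   Context: $\mathcal{L}=\{ae_1+b\hat e_2:a,b\in\mathbb{Z}\}$ with $e_1=(1,0)$, $\hat e_2=\frac12(1,\sqrt3)$, $\mathcal{L}_\varepsilon=\varepsilon\mathcal{L}$, $\mathcal{L}_\varepsilon(R)=\mathcal{L}_\varepsilon\cap R$; $\mathcal{T}_\varepsilon$ is the set of closed triangles with vertices in $\mathcal{L}_\varepsilon$ pairwise at distance $\varepsilon$; $\mathcal{E}_\varepsilon$ the set of segments $[i,j]$, $i,j\in\mathcal{L}_\varepsilon$, $|i-j|=\varepsilon$. $n=(0,0,1)$; $\mathcal{SF}_\varepsilon(\Omega)$ is the set of $u:\mathcal{L}_\varepsilon\to\mathbb{S}^2$ with $u=n$ on $\mathcal{L}_\varepsilon\setminus\Omega$. $\mathcal{N}_\varepsilon(u)=\{[i,j]\in\mathcal{E}_\varepsilon:u(i)=-u(j)\}$, $\mathcal{C}_\varepsilon(u)=\mathcal{E}_\varepsilon\setminus\mathcal{N}_\varepsilon(u)$. Two triangles of $\mathcal{T}_\varepsilon$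 are neighbours if their intersection is an edge in $\mathcal{N}_\varepsilon(u)$, and connected if joined by a finite chain of consecutive neighbours. $\mathcal{R}_\varepsilon(u)$ is the set of admissible interpolation regions: unions of pairwise connected triangles of $\mathcal{T}_\varepsilon$ that are maximal with respect to inclusion. A boundary edge of $R$ is an edge $[i,j]\in\mathcal{C}_\varepsilon(u)$ which is the common edge of a triangle $T\subseteq R$ and a triangle $T'\in\mathcal{T}_\varepsilon$ with $T'\subseteq\mathbb{R}^2\setminus\mathrm{int}(R)$. *)

theory Defs
  imports "HOL-Analysis.Analysis"
begin

definition e1 :: "real^2" where "e1 = vector [1, 0]"
definition e2hat :: "real^2" where "e2hat = vector [1/2, sqrt 3 / 2]"

definition lat :: "real \<Rightarrow> (real^2) set" where
  "lat eps = {eps *\<^sub>R (of_int a *\<^sub>R e1 + of_int b *\<^sub>R e2hat) | a b :: int. True}"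

definition tri :: "real \<Rightarrow> (real^2) set set" where
  "tri eps = {convex hull {i, j, k} | i j k. i \<in> lat eps \<and> j \<in> lat eps \<and> k \<in> lat eps
       \<and> dist i j = eps \<and> dist j k = eps \<and> dist i k = eps}"

definition edg :: "real \<Rightarrow> (real^2) set set" where
  "edg eps = {closed_segment i j | i j. i \<in> lat eps \<and> j \<in> lat eps \<and> dist i j = eps}"

definition npole :: "real^3" where "npole = vector [0, 0, 1]"

text \<open>SF_eps(Omega): spin fields u : L_eps -> S^2 with u = n on L_eps minus Omega
  (values of u off the lattice are irrelevant).\<close>
definition SF :: "real \<Rightarrow> (real^2) set \<Rightarrow> ((real^2) \<Rightarrow> real^3) set" where
  "SF eps \<Omega> = {u. (\<forall>i \<in> lat eps. u i \<in> sphere 0 1) \<and> (\<forall>i \<in> lat eps - \<Omega>. u i = npole)}"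

definition Nedg :: "real \<Rightarrow> ((real^2) \<Rightarrow> real^3) \<Rightarrow> (real^2) set set" where
  "Nedg eps u = {closed_segment i j | i j. i \<in> lat eps \<and> j \<in> lat eps \<and> dist i j = eps
       \<and> u i = - u j}"

definition Cedg :: "real \<Rightarrow> ((real^2) \<Rightarrow> real^3) \<Rightarrow> (real^2) set set" where
  "Cedg eps u = edg eps - Nedg eps u"

definition neighbours :: "real \<Rightarrow> ((real^2) \<Rightarrow> real^3) \<Rightarrow> (real^2) set \<Rightarrow> (real^2) set \<Rightarrow> bool" where
  "neighbours eps u T T' \<longleftrightarrow> T \<in> tri eps \<and> T' \<in> tri eps \<and> T \<inter> T' \<in> Nedg eps u"

definition tconnected :: "real \<Rightarrow> ((real^2) \<Rightarrow> real^3) \<Rightarrow> (real^2) set \<Rightarrow> (real^2) set \<Rightarrow> bool" where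
  "tconnected eps u T T' \<longleftrightarrow> T \<in> tri eps \<and> T' \<in> tri eps \<and> (neighbours eps u)\<^sup>*\<^sup>* T T'"

definition pw_connected :: "real \<Rightarrow> ((real^2) \<Rightarrow> real^3) \<Rightarrow> (real^2) set set \<Rightarrow> bool" where
  "pw_connected eps u S \<longleftrightarrow> S \<subseteq> tri eps \<and> (\<forall>T \<in> S. \<forall>T' \<in> S. tconnected eps u T T')"

definition regions :: "real \<Rightarrow> ((real^2) \<Rightarrow> real^3) \<Rightarrow> (real^2) set set" where
  "regions eps u = {R. \<exists>S. pw_connected eps u S \<and> R = \<Union>S \<and>
       (\<forall>S'. pw_connected eps u S' \<and> R \<subseteq> \<Union>S' \<longrightarrow> \<Union>S' = R)}"

definition bdry_edge :: "real \<Rightarrow> ((real^2) \<Rightarrow> real^3) \<Rightarrow> (real^2) set \<Rightarrow> (real^2) set \<Rightarrow> bool" where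
  "bdry_edge eps u R e \<longleftrightarrow> e \<in> Cedg eps u \<and>
     (\<exists>T T'. T \<in> tri eps \<and> T \<subseteq> R \<and> T' \<in> tri eps \<and> T' \<subseteq> - interior R \<and> T \<inter> T' = e)"

end

theory Submission
  imports Defs
begin

definition phi :: "real \<Rightarrow> real \<Rightarrow> real \<Rightarrow> real^2" where
  "phi eps s t = eps *\<^sub>R (s *\<^sub>R e1 + t *\<^sub>R e2hat)"

lemma phi_1: "phi eps s t $ 1 = eps * (s + t/2)"
  by (simp add: phi_def e1_def e2hat_def algebra_simps)
lemma phi_2: "phi eps s t $ 2 = eps * t * sqrt 3 / 2"
  by (simp add: phi_def e1_def e2hat_def algebra_simps)

lemma vec2_eq: "(x::real^2) = y \<longleftrightarrow> x$1 = y$1 \<and> x$2 = y$2"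
  by (metis (mono_tags, lifting) exhaust_2 vec_eq_iff)

lemma norm2_sq: "norm (x::real^2) ^ 2 = x$1^2 + x$2^2"
  by (simp only: power2_norm_eq_inner) (simp add: inner_vec_def sum_2 power2_eq_square)

lemma phi_add: "phi eps s t + phi eps s' t' = phi eps (s+s') (t+t')"
  by (simp add: vec2_eq phi_1 phi_2 algebra_simps)
lemma phi_diff: "phi eps s t - phi eps s' t' = phi eps (s-s') (t-t')"
  by (simp add: vec2_eq phi_1 phi_2 field_simps)
lemma phi_scale: "r *\<^sub>R phi eps s t = phi eps (r * s) (r * t)"
  by (simp add: vec2_eq phi_1 phi_2 algebra_simps)

lemma norm_phi_sq: "norm (phi eps s t) ^ 2 = eps^2 * (s^2 + s*t + t^2)"
  unfolding norm2_sq phi_1 phi_2 by (simp add: power2_eq_square algebra_simps)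

lemma phi_inj: assumes "eps > 0" shows "phi eps s t = phi eps s' t' \<longleftrightarrow> s = s' \<and> t = t'"
  using assms by (auto simp: vec2_eq phi_1 phi_2)


definition Q :: "int \<Rightarrow> int \<Rightarrow> int" where "Q s t = s^2 + s*t + t^2"

lemma sq_le1: fixes t :: int assumes "t^2 \<le> 1" shows "t \<in> {-1,0,1}"
proof -
  have "\<bar>t\<bar> \<le> 1"
  proof (rule ccontr)
    assume "\<not> \<bar>t\<bar> \<le> 1"
    then have "2 \<le> \<bar>t\<bar>" by simp
    then have "2*2 \<le> \<bar>t\<bar>*\<bar>t\<bar>" by (intro mult_mono) auto
    then show False using assms by (simp add: power2_eq_square)
  qed
  then show ?thesis by auto
qed

lemma Q_unit: assumes "Q s t = 1"
  shows "(s,t) \<in> {(1,0),(-1,0),(0,1),(0,-1),(1,-1),(-1,1)}"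
proof -
  have a: "(2* s+t)^2 + 3*t^2 = 4" using assms unfolding Q_def by (simp add: power2_eq_square algebra_simps)
  have b: "(2*t+s)^2 + 3* s^2 = 4" using assms unfolding Q_def by (simp add: power2_eq_square algebra_simps)
  have "t^2 \<le> 1" using a zero_le_power2[of "2* s+t"] by linarith
  then have t: "t \<in> {-1,0,1}" by (rule sq_le1)
  have "s^2 \<le> 1" using b zero_le_power2[of "2*t+s"] by linarith
  then have s: "s \<in> {-1,0,1}" by (rule sq_le1)
  from s t assms show ?thesis unfolding Q_def by auto
qed

lemma Q_pos: assumes "(s,t) \<noteq> (0,0)" shows "Q s t \<ge> 1"
proof -
  have "4 * Q s t = (2* s+t)^2 + 3*t^2" unfolding Q_def by (simp add: power2_eq_square algebra_simps)
  moreover have "4 * Q s t = (2*t+s)^2 + 3* s^2" unfolding Q_def by (simp add: power2_eq_square algebra_simps)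
  moreover have "t \<noteq> 0 \<or> s \<noteq> 0" using assms by auto
  moreover have "t \<noteq> 0 \<Longrightarrow> t^2 > 0" "s \<noteq> 0 \<Longrightarrow> s^2 > 0" by auto
  ultimately have "Q s t > 0" using zero_le_power2[of "2*t+s"] zero_le_power2[of "2* s+t"] by linarith
  then show ?thesis by simp
qed
lemma Q_swap: "Q (x-y) (z-w) = Q (y-x) (w-z)"
  unfolding Q_def by (simp add: power2_eq_square algebra_simps)

lemma tri_int:
  assumes "Q p1 p2 = 1" "Q q1 q2 = 1" "Q (q1-p1) (q2-p2) = 1"
  shows "\<exists>m n. {(0,0),(p1,p2),(q1,q2)} = {(m,n),(m+1,n),(m,n+1)}
             \<or> {(0,0),(p1,p2),(q1,q2)} = {(m+1,n),(m,n+1),(m+1,n+1::int)}"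
proof -
  from Q_unit[OF assms(1)] Q_unit[OF assms(2)] assms(3)
  show ?thesis
    apply (simp only: insert_iff prod.inject empty_iff simp_thms)
    apply (elim disjE conjE)
    apply (simp_all add: Q_def)
    apply (rule exI[of _ "min 0 (min p1 q1)"], rule exI[of _ "min 0 (min p2 q2)"], simp add: insert_commute)+
    done
qed


lemma nb_int:
  assumes "Q d1 d2 = 1" "Q p1 p2 = 1" "Q q1 q2 = 1" "Q (p1-d1) (p2-d2) = 1" "Q (q1-d1) (q2-d2) = 1"
  shows "(p1 = q1 \<and> p2 = q2) \<or> (p1 = d1 - q1 \<and> p2 = d2 - q2)"
  using Q_unit[OF assms(1)] Q_unit[OF assms(2)] Q_unit[OF assms(3)] assms(4,5)
  apply (simp only: insert_iff prod.inject empty_iff simp_thms)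
  apply (elim disjE conjE)
  apply (simp_all add: Q_def)
  done


lemma det_int:
  assumes "Q p1 p2 = 1" "Q q1 q2 = 1" "Q (q1-p1) (q2-p2) = 1"
  shows "p1 * q2 - p2 * q1 \<noteq> 0"
  using Q_unit[OF assms(1)] Q_unit[OF assms(2)] assms(3)
  apply (simp only: insert_iff prod.inject empty_iff simp_thms)
  apply (elim disjE conjE)
  apply (simp_all add: Q_def)
  done

lemma lat_iff: "z \<in> lat eps \<longleftrightarrow> (\<exists>a b::int. z = phi eps (of_int a) (of_int b))"
  unfolding lat_def phi_def by auto

lemma dist_phi: "dist (phi eps s t) (phi eps s' t') = norm (phi eps (s-s') (t-t'))"
  by (simp add: dist_norm phi_diff)

lemma norm_phi_eq: assumes "eps > 0"
  shows "norm (phi eps (of_int a) (of_int b)) = eps \<longleftrightarrow> Q a b = 1"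
proof -
  have "norm (phi eps (of_int a) (of_int b)) = eps \<longleftrightarrow> norm (phi eps (of_int a) (of_int b))^2 = eps^2"
    using assms by (metis norm_ge_zero power2_eq_imp_eq less_imp_le)
  also have "\<dots> \<longleftrightarrow> eps^2 * of_int (Q a b) = eps^2 * 1"
    by (simp add: norm_phi_sq Q_def)
  also have "\<dots> \<longleftrightarrow> Q a b = 1" using assms by simp
  finally show ?thesis .
qed

lemma norm_phi_ge: assumes "eps > 0" "(a,b) \<noteq> (0,0)"
  shows "norm (phi eps (of_int a) (of_int b)) \<ge> eps"
proof -
  have "eps^2 * 1 \<le> eps^2 * of_int (Q a b)" using Q_pos[OF assms(2)]
    by (intro mult_left_mono) auto
  then have "eps^2 \<le> norm (phi eps (of_int a) (of_int b))^2" by (simp add: norm_phi_sq Q_def)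
  then show ?thesis using assms(1) by (meson norm_ge_zero power2_le_imp_le)
qed

lemma lat_sep: assumes "eps > 0" "i \<in> lat eps" "j \<in> lat eps" "i \<noteq> j" shows "dist i j \<ge> eps"
proof -
  obtain a b c d :: int where ij: "i = phi eps a b" "j = phi eps c d" using assms lat_iff by metis
  then have "(a - c, b - d) \<noteq> (0,0)" using assms(4) by auto
  then show ?thesis using norm_phi_ge[OF assms(1), of "a-c" "b-d"] ij by (simp add: dist_phi)
qed

lemma lat_dist: assumes "eps > 0"
  shows "dist (phi eps (of_int a) (of_int b)) (phi eps (of_int c) (of_int d)) = eps \<longleftrightarrow> Q (a-c) (b-d) = 1"
  using norm_phi_eq[OF assms, of "a-c" "b-d"] by (simp add: dist_phi)

lemma lat_comb: "i \<in> lat eps \<Longrightarrow> j \<in> lat eps \<Longrightarrow> k \<in> lat eps \<Longrightarrow> i + j - k \<in> lat eps"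
  unfolding lat_iff by (auto simp: phi_add phi_diff) (metis of_int_add of_int_diff)

definition upv :: "real \<Rightarrow> int \<Rightarrow> int \<Rightarrow> (real^2) set" where
  "upv eps m n = {phi eps m n, phi eps (m+1) n, phi eps m (n+1)}"
definition dnv :: "real \<Rightarrow> int \<Rightarrow> int \<Rightarrow> (real^2) set" where
  "dnv eps m n = {phi eps (m+1) n, phi eps m (n+1), phi eps (m+1) (n+1)}"

definition tri3 :: "real \<Rightarrow> real^2 \<Rightarrow> real^2 \<Rightarrow> real^2 \<Rightarrow> bool" where
  "tri3 eps a b c \<longleftrightarrow> a \<in> lat eps \<and> b \<in> lat eps \<and> c \<in> lat eps \<and> dist a b = eps \<and> dist b c = eps \<and> dist a c = eps"

lemma tri3_class: assumes "eps > 0" "tri3 eps x y z"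
  shows "\<exists>m n. {x,y,z} = upv eps m n \<or> {x,y,z} = dnv eps m n"
proof -
  obtain x1 x2 y1 y2 z1 z2 :: int where xyz: "x = phi eps x1 x2" "y = phi eps y1 y2" "z = phi eps z1 z2"
    using assms(2) unfolding tri3_def lat_iff by metis
  have q: "Q (y1-x1) (y2-x2) = 1" "Q (z1-x1) (z2-x2) = 1" "Q ((z1-x1)-(y1-x1)) ((z2-x2)-(y2-x2)) = 1"
    using assms(2) unfolding tri3_def xyz lat_dist[OF assms(1)]
    by (auto simp: dist_commute lat_dist[OF assms(1)] Q_swap[of y1 x1] Q_swap[of z1 x1] Q_swap[of z1 y1])
  obtain m n where mn: "{(0,0),(y1-x1,y2-x2),(z1-x1,z2-x2)} = {(m,n),(m+1,n),(m,n+1)}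
             \<or> {(0,0),(y1-x1,y2-x2),(z1-x1,z2-x2)} = {(m+1,n),(m,n+1),(m+1,n+1::int)}"
    using tri_int[OF q] by blast
  define f where "f = (\<lambda>(s::int,t::int). phi eps (of_int (x1 + s)) (of_int (x2 + t)))"
  have "{x,y,z} = f ` {(0,0),(y1-x1,y2-x2),(z1-x1,z2-x2)}" unfolding f_def xyz by simp
  moreover have "f ` {(m,n),(m+1,n),(m,n+1)} = upv eps (x1+m) (x2+n)"
    unfolding f_def upv_def by (simp add: add.assoc)
  moreover have "f ` {(m+1,n),(m,n+1),(m+1,n+1)} = dnv eps (x1+m) (x2+n)"
    unfolding f_def dnv_def by (simp add: add.assoc)
  ultimately show ?thesis using mn by metis
qed


definition sig :: "real \<Rightarrow> real^2 \<Rightarrow> real" where "sig eps z = z$1/eps - z$2/(eps * sqrt 3)"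
definition tau :: "real \<Rightarrow> real^2 \<Rightarrow> real" where "tau eps z = 2 * z$2/(eps * sqrt 3)"

lemma sig_phi: "eps > 0 \<Longrightarrow> sig eps (phi eps s t) = s"
  by (simp add: sig_def phi_1 phi_2 field_simps)
lemma tau_phi: "eps > 0 \<Longrightarrow> tau eps (phi eps s t) = t"
  by (simp add: tau_def phi_1 phi_2 field_simps)
lemma sig_lin: "sig eps (x + y) = sig eps x + sig eps y" "sig eps (r *\<^sub>R x) = r * sig eps x"
  by (simp_all add: sig_def add_divide_distrib diff_divide_distrib right_diff_distrib)
lemma tau_lin: "tau eps (x + y) = tau eps x + tau eps y" "tau eps (r *\<^sub>R x) = r * tau eps x"
  by (simp_all add: tau_def add_divide_distrib)
lemma sig3: "sig eps (u *\<^sub>R A + v *\<^sub>R B + w *\<^sub>R C) = u * sig eps A + v * sig eps B + w * sig eps C"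
  by (simp add: sig_lin)
lemma tau3: "tau eps (u *\<^sub>R A + v *\<^sub>R B + w *\<^sub>R C) = u * tau eps A + v * tau eps B + w * tau eps C"
  by (simp add: tau_lin)

lemma up_bounds: assumes "eps > 0" "z \<in> convex hull (upv eps m n)"
  shows "m \<le> sig eps z \<and> sig eps z \<le> m+1 \<and> n \<le> tau eps z \<and> tau eps z \<le> n+1
    \<and> m+n \<le> sig eps z + tau eps z \<and> sig eps z + tau eps z \<le> m+n+1"
proof -
  obtain u v w where uvw: "0 \<le> u" "0 \<le> v" "0 \<le> w" "u+v+w = 1"
    "z = u *\<^sub>R phi eps m n + v *\<^sub>R phi eps (m+1) n + w *\<^sub>R phi eps m (n+1)"
    using assms(2) unfolding upv_def convex_hull_3 by auto
  have "sig eps z = u * m + v * (m+1) + w * m"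
    unfolding uvw(5) sig3 sig_phi[OF assms(1)] by simp
  also have "\<dots> = (u+v+w) * m + v" by (simp add: algebra_simps)
  finally have s: "sig eps z = m + v" using uvw(4) by simp
  have "tau eps z = u * n + v * n + w * (n+1)"
    unfolding uvw(5) tau3 tau_phi[OF assms(1)] by simp
  also have "\<dots> = (u+v+w) * n + w" by (simp add: algebra_simps)
  finally have t: "tau eps z = n + w" using uvw(4) by simp
  show ?thesis unfolding s t using uvw by auto
qed

lemma dn_bounds: assumes "eps > 0" "z \<in> convex hull (dnv eps m n)"
  shows "m \<le> sig eps z \<and> sig eps z \<le> m+1 \<and> n \<le> tau eps z \<and> tau eps z \<le> n+1
    \<and> m+n+1 \<le> sig eps z + tau eps z \<and> sig eps z + tau eps z \<le> m+n+2"
proof -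
  obtain u v w where uvw: "0 \<le> u" "0 \<le> v" "0 \<le> w" "u+v+w = 1"
    "z = u *\<^sub>R phi eps (m+1) n + v *\<^sub>R phi eps m (n+1) + w *\<^sub>R phi eps (m+1) (n+1)"
    using assms(2) unfolding dnv_def convex_hull_3 by auto
  have "sig eps z = u * (m+1) + v * m + w * (m+1)"
    unfolding uvw(5) sig3 sig_phi[OF assms(1)] by simp
  also have "\<dots> = (u+v+w) * m + u + w" by (simp add: algebra_simps)
  finally have s: "sig eps z = m + u + w" using uvw(4) by simp
  have "tau eps z = u * n + v * (n+1) + w * (n+1)"
    unfolding uvw(5) tau3 tau_phi[OF assms(1)] by simp
  also have "\<dots> = (u+v+w) * n + v + w" by (simp add: algebra_simps)
  finally have t: "tau eps z = n + v + w" using uvw(4) by simp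
  show ?thesis unfolding s t using uvw by auto
qed


lemma lat_in_up: assumes "eps > 0" "z \<in> lat eps" "z \<in> convex hull (upv eps m n)"
  shows "z \<in> upv eps m n"
proof -
  obtain p q :: int where z: "z = phi eps p q" using assms(2) lat_iff by metis
  have b: "real_of_int m \<le> p" "real_of_int n \<le> q" "real_of_int p + q \<le> m + n + 1"
    using up_bounds[OF assms(1,3)] unfolding z sig_phi[OF assms(1)] tau_phi[OF assms(1)] by auto
  then have "m \<le> p" "n \<le> q" "p + q \<le> m + n + 1" by linarith+
  then have "(p = m \<and> q = n) \<or> (p = m+1 \<and> q = n) \<or> (p = m \<and> q = n+1)" by linarith
  then show ?thesis unfolding z upv_def by auto
qed

lemma lat_in_dn: assumes "eps > 0" "z \<in> lat eps" "z \<in> convex hull (dnv eps m n)"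
  shows "z \<in> dnv eps m n"
proof -
  obtain p q :: int where z: "z = phi eps p q" using assms(2) lat_iff by metis
  have b: "real_of_int p \<le> m + 1" "real_of_int q \<le> n + 1" "real_of_int m + n + 1 \<le> p + q"
    using dn_bounds[OF assms(1,3)] unfolding z sig_phi[OF assms(1)] tau_phi[OF assms(1)] by auto
  then have "p \<le> m + 1" "q \<le> n + 1" "m + n + 1 \<le> p + q" by linarith+
  then have "(p = m+1 \<and> q = n) \<or> (p = m \<and> q = n+1) \<or> (p = m+1 \<and> q = n+1)" by linarith
  then show ?thesis unfolding z dnv_def by auto
qed

lemma lat_vert: assumes "eps > 0" "tri3 eps a b c" "z \<in> lat eps" "z \<in> convex hull {a,b,c}"
  shows "z \<in> {a,b,c}"
proof -
  obtain m n where "{a,b,c} = upv eps m n \<or> {a,b,c} = dnv eps m n"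
    using tri3_class[OF assms(1,2)] by blast
  then show ?thesis using lat_in_up[OF assms(1,3)] lat_in_dn[OF assms(1,3)] assms(4) by metis
qed

lemma tri3_lat: "tri3 eps a b c \<Longrightarrow> a \<in> lat eps \<and> b \<in> lat eps \<and> c \<in> lat eps"
  unfolding tri3_def by auto

lemma tri3_distinct: "eps > 0 \<Longrightarrow> tri3 eps a b c \<Longrightarrow> a \<noteq> b \<and> b \<noteq> c \<and> a \<noteq> c"
  unfolding tri3_def by auto

lemma tri3_perm: assumes "tri3 eps a b c" "{i,j,k} = {a,b,c}" "i \<noteq> j" "j \<noteq> k" "i \<noteq> k"
  shows "tri3 eps i j k"
proof -
  have d: "\<And>x y. x \<in> {a,b,c} \<Longrightarrow> y \<in> {a,b,c} \<Longrightarrow> x \<noteq> y \<Longrightarrow> dist x y = eps"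
    using assms(1) unfolding tri3_def by (auto simp: dist_commute)
  have l: "\<And>x. x \<in> {a,b,c} \<Longrightarrow> x \<in> lat eps" using assms(1) unfolding tri3_def by auto
  have *: "i \<in> {a,b,c}" "j \<in> {a,b,c}" "k \<in> {a,b,c}" using assms(2) by blast+
  show ?thesis unfolding tri3_def
    using l[OF *(1)] l[OF *(2)] l[OF *(3)] d[OF *(1,2) assms(3)] d[OF *(2,3) assms(4)] d[OF *(1,3) assms(5)]
    by blast
qed

lemma tri3_swap12: "tri3 eps a b c \<Longrightarrow> tri3 eps b a c" unfolding tri3_def by (auto simp: dist_commute)
lemma tri3_rot: "tri3 eps a b c \<Longrightarrow> tri3 eps b c a" unfolding tri3_def by (auto simp: dist_commute)

lemma tri_iff: "X \<in> tri eps \<longleftrightarrow> (\<exists>a b c. X = convex hull {a,b,c} \<and> tri3 eps a b c)"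
  unfolding tri_def tri3_def by auto

lemma third: assumes "i \<in> {a,b,c::'a}" "j \<in> {a,b,c}" "i \<noteq> j"
  obtains k where "{i,j,k} = {a,b,c}"
proof -
  from assms have "(i=a\<and>j=b) \<or> (i=b\<and>j=a) \<or> (i=a\<and>j=c) \<or> (i=c\<and>j=a) \<or> (i=b\<and>j=c) \<or> (i=c\<and>j=b)"
    by auto
  then show ?thesis
  proof (elim disjE conjE)
  qed (rule that, simp add: insert_commute; blast)+
qed

lemma nb_unique: assumes "eps > 0" "tri3 eps a b c" "tri3 eps a b y"
  shows "y = c \<or> y = a + b - c"
proof -
  obtain a1 a2 b1 b2 c1 c2 y1 y2 :: int where v: "a = phi eps a1 a2" "b = phi eps b1 b2" "c = phi eps c1 c2"
    "y = phi eps y1 y2"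
    using assms(2,3) unfolding tri3_def lat_iff by metis
  have q: "Q (b1-a1) (b2-a2) = 1" "Q (y1-a1) (y2-a2) = 1" "Q (c1-a1) (c2-a2) = 1"
     "Q ((y1-a1)-(b1-a1)) ((y2-a2)-(b2-a2)) = 1" "Q ((c1-a1)-(b1-a1)) ((c2-a2)-(b2-a2)) = 1"
    using assms(2,3) unfolding tri3_def v lat_dist[OF assms(1)]
    by (auto simp: dist_commute lat_dist[OF assms(1)] Q_swap[of b1 a1] Q_swap[of y1 a1] Q_swap[of c1 a1] Q_swap[of y1 b1] Q_swap[of c1 b1])
  from nb_int[OF q] have "(y1 = c1 \<and> y2 = c2) \<or> (y1 = a1 + b1 - c1 \<and> y2 = a2 + b2 - c2)" by auto
  then show ?thesis unfolding v phi_add phi_diff by auto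
qed


lemma not_in_seg: assumes "eps > 0" "tri3 eps a b c" shows "c \<notin> closed_segment a b"
proof
  assume "c \<in> closed_segment a b"
  then have "dist a b = dist a c + dist c b" using between between_mem_segment by metis
  then show False using assms unfolding tri3_def by (simp add: dist_commute)
qed

definition cr :: "real^2 \<Rightarrow> real^2 \<Rightarrow> real" where "cr x y = x$1 * y$2 - x$2 * y$1"

lemma cr_phi: "cr (phi eps s t) (phi eps s' t') = eps^2 * sqrt 3 / 2 * (s * t' - t * s')"
  unfolding cr_def phi_1 phi_2 by (simp add: power2_eq_square field_simps)

lemma cr_nz: assumes "eps > 0" "tri3 eps a b c" shows "cr (b - a) (c - a) \<noteq> 0"
proof -
  obtain a1 a2 b1 b2 c1 c2 :: int where v: "a = phi eps a1 a2" "b = phi eps b1 b2" "c = phi eps c1 c2"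
    using assms(2) unfolding tri3_def lat_iff by metis
  have q: "Q (b1-a1) (b2-a2) = 1" "Q (c1-a1) (c2-a2) = 1"
     "Q ((c1-a1)-(b1-a1)) ((c2-a2)-(b2-a2)) = 1"
    using assms(2) unfolding tri3_def v lat_dist[OF assms(1)]
    by (auto simp: dist_commute lat_dist[OF assms(1)] Q_swap[of b1 a1] Q_swap[of c1 a1] Q_swap[of c1 b1])
  have "(b1-a1) * (c2-a2) - (b2-a2) * (c1-a1) \<noteq> 0" by (rule det_int[OF q])
  then have "real_of_int ((b1-a1) * (c2-a2) - (b2-a2) * (c1-a1)) \<noteq> 0" by linarith
  moreover have "cr (b - a) (c - a) = eps^2 * sqrt 3 / 2 * real_of_int ((b1-a1) * (c2-a2) - (b2-a2) * (c1-a1))"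
    unfolding v phi_diff cr_phi by simp
  moreover have "eps^2 * sqrt 3 / 2 \<noteq> 0" using assms(1) by simp
  ultimately show ?thesis by (metis mult_eq_0_iff)
qed

lemma cr_comb1: assumes "u + v + w = 1" shows "cr (b - a) ((u *\<^sub>R a + v *\<^sub>R b + w *\<^sub>R c) - a) = w * cr (b - a) (c - a)"
proof -
  have u: "u = 1 - v - w" using assms by simp
  show ?thesis unfolding cr_def u by (simp add: algebra_simps)
qed

lemma cr_comb2: assumes "u + v + w = 1" shows "cr (b - a) ((u *\<^sub>R a + v *\<^sub>R b + w *\<^sub>R (a + b - c)) - a) = - w * cr (b - a) (c - a)"
proof -
  have u: "u = 1 - v - w" using assms by simp
  show ?thesis unfolding cr_def u by (simp add: algebra_simps)
qed

lemma tri_inter: assumes "eps > 0" "tri3 eps a b c"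
  shows "convex hull {a,b,c} \<inter> convex hull {a,b,a+b-c} = closed_segment a b"
proof
  show "closed_segment a b \<subseteq> convex hull {a,b,c} \<inter> convex hull {a,b,a+b-c}"
    unfolding segment_convex_hull by (intro Int_greatest hull_mono) auto
next
  show "convex hull {a,b,c} \<inter> convex hull {a,b,a+b-c} \<subseteq> closed_segment a b"
  proof
    fix z assume z: "z \<in> convex hull {a,b,c} \<inter> convex hull {a,b,a+b-c}"
    obtain u v w where uvw: "0 \<le> u" "0 \<le> v" "0 \<le> w" "u+v+w = 1"
      "z = u *\<^sub>R a + v *\<^sub>R b + w *\<^sub>R c" using z unfolding convex_hull_3 by auto
    obtain u' v' w' where uvw': "0 \<le> u'" "0 \<le> v'" "0 \<le> w'" "u'+v'+w' = 1"
      "z = u' *\<^sub>R a + v' *\<^sub>R b + w' *\<^sub>R (a+b-c)" using z unfolding convex_hull_3 by blast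
    have "w * cr (b - a) (c - a) = - w' * cr (b - a) (c - a)"
      using cr_comb1[OF uvw(4), of b a c] cr_comb2[OF uvw'(4), of b a c] uvw(5) uvw'(5) by simp
    then have "(w + w') * cr (b - a) (c - a) = 0" by (simp add: algebra_simps)
    then have "w = - w'" using cr_nz[OF assms] by simp
    then have "w = 0" using uvw(3) uvw'(3) by simp
    moreover have "u = 1 - v" using uvw(4) \<open>w = 0\<close> by simp
    ultimately have "z = (1 - v) *\<^sub>R a + v *\<^sub>R b" using uvw(5) by simp
    moreover have "v \<le> 1" using uvw by simp
    ultimately show "z \<in> closed_segment a b" unfolding closed_segment_def using uvw(2) by blast
  qed
qed


lemma strict_comb: fixes t x c lo hi :: real
  assumes "0 < t" "t \<le> 1" "lo \<le> x" "x \<le> hi" "lo < c" "c < hi"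
  shows "lo < (1-t)*x + t*c \<and> (1-t)*x + t*c < hi"
proof -
  have "(1-t)*(x - lo) \<ge> 0" "t*(c-lo) > 0" "(1-t)*(hi - x) \<ge> 0" "t*(hi - c) > 0"
    using assms by auto
  then show ?thesis by (simp add: algebra_simps)
qed

lemma int_squeeze: fixes x :: real
  assumes "of_int m' \<le> x" "x \<le> of_int m' + 1" "of_int m < x" "x < of_int m + 1"
  shows "m' = m"
proof -
  have "real_of_int m' < real_of_int (m + 1)" using assms by simp
  then have "m' < m + 1" by (simp only: of_int_less_iff)
  moreover have "real_of_int m < real_of_int (m' + 1)" using assms by simp
  then have "m < m' + 1" by (simp only: of_int_less_iff)
  ultimately show ?thesis by simp
qed

lemma int_sep: fixes x :: real
  assumes "of_int k < x" "x < of_int k + 1" "of_int k + 1 \<le> x \<or> x \<le> of_int k"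
  shows False using assms by linarith

lemma tri_cls: assumes "eps > 0" "X \<in> tri eps"
  shows "\<exists>m n. X = convex hull (upv eps m n) \<or> X = convex hull (dnv eps m n)"
proof -
  obtain a b c where "X = convex hull {a,b,c}" "tri3 eps a b c" using assms(2) tri_iff by blast
  then show ?thesis using tri3_class[OF assms(1)] by metis
qed

lemma sig_comb: "sig eps ((1-t) *\<^sub>R z + t *\<^sub>R g) = (1-t) * sig eps z + t * sig eps g"
  by (simp add: sig_lin)
lemma tau_comb: "tau eps ((1-t) *\<^sub>R z + t *\<^sub>R g) = (1-t) * tau eps z + t * tau eps g"
  by (simp add: tau_lin)
lemma st_comb: "sig eps ((1-t) *\<^sub>R z + t *\<^sub>R g) + tau eps ((1-t) *\<^sub>R z + t *\<^sub>R g)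
   = (1-t) * (sig eps z + tau eps z) + t * (sig eps g + tau eps g)"
  unfolding sig_comb tau_comb by (simp add: algebra_simps)

lemma cls_bounds: assumes "eps > 0" "Y \<in> tri eps" "w \<in> Y"
  shows "\<exists>m' n'. of_int m' \<le> sig eps w \<and> sig eps w \<le> of_int m' + 1 \<and> of_int n' \<le> tau eps w \<and> tau eps w \<le> of_int n' + 1
     \<and> ((Y = convex hull (upv eps m' n') \<and> sig eps w + tau eps w \<le> of_int m' + of_int n' + 1)
       \<or> (Y = convex hull (dnv eps m' n') \<and> of_int m' + of_int n' + 1 \<le> sig eps w + tau eps w))"
proof -
  obtain m' n' where "Y = convex hull (upv eps m' n') \<or> Y = convex hull (dnv eps m' n')"
    using tri_cls[OF assms(1,2)] by blast
  then show ?thesis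
  proof
    assume Y: "Y = convex hull (upv eps m' n')"
    show ?thesis using up_bounds[OF assms(1), of w m' n'] assms(3) Y by (intro exI[of _ m'] exI[of _ n']) auto
  next
    assume Y: "Y = convex hull (dnv eps m' n')"
    show ?thesis using dn_bounds[OF assms(1), of w m' n'] assms(3) Y by (intro exI[of _ m'] exI[of _ n']) auto
  qed
qed

lemma gen_point: assumes "eps > 0" "X \<in> tri eps"
  shows "\<exists>g \<in> X. \<forall>z \<in> X. \<forall>t. 0 < t \<and> t \<le> 1 \<longrightarrow> (\<forall>Y \<in> tri eps. (1-t) *\<^sub>R z + t *\<^sub>R g \<in> Y \<longrightarrow> Y = X)"
proof -
  obtain m n where "X = convex hull (upv eps m n) \<or> X = convex hull (dnv eps m n)"
    using tri_cls[OF assms] by blast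
  then show ?thesis
  proof
    assume X: "X = convex hull (upv eps m n)"
    define g where "g = phi eps (m + 1/3) (n + 1/3)"
    have "g = (1/3) *\<^sub>R phi eps m n + (1/3) *\<^sub>R phi eps (m+1) n + (1/3) *\<^sub>R phi eps m (n+1)"
      unfolding g_def by (simp add: vec2_eq phi_1 phi_2 field_simps)
    then have gX: "g \<in> X" unfolding X upv_def convex_hull_3
      by (intro CollectI exI[of _ "1/3"]) auto
    have sg: "sig eps g = m + 1/3" "tau eps g = n + 1/3"
      unfolding g_def using sig_phi[OF assms(1)] tau_phi[OF assms(1)] by auto
    show ?thesis
    proof (intro bexI[OF _ gX] ballI allI impI)
      fix z t Y assume z: "z \<in> X" and t: "0 < t \<and> t \<le> 1" and Y: "Y \<in> tri eps"
        and w: "(1-t) *\<^sub>R z + t *\<^sub>R g \<in> Y"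
      define w where "w = (1-t) *\<^sub>R z + t *\<^sub>R g"
      have bz: "m \<le> sig eps z \<and> sig eps z \<le> m+1 \<and> n \<le> tau eps z \<and> tau eps z \<le> n+1
          \<and> m+n \<le> sig eps z + tau eps z \<and> sig eps z + tau eps z \<le> m+n+1"
        using up_bounds[OF assms(1), of z m n] z X by simp
      have s1: "m < sig eps w \<and> sig eps w < m + 1"
        unfolding w_def sig_comb sg using bz t by (intro strict_comb) auto
      have s2: "n < tau eps w \<and> tau eps w < n + 1"
        unfolding w_def tau_comb sg using bz t by (intro strict_comb) auto
      have s3: "m + n < sig eps w + tau eps w \<and> sig eps w + tau eps w < m + n + 1"
        unfolding w_def st_comb sg using bz t by (intro strict_comb) auto
      obtain m' n' where b: "of_int m' \<le> sig eps w \<and> sig eps w \<le> of_int m' + 1 \<and> of_int n' \<le> tau eps w \<and> tau eps w \<le> of_int n' + 1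
     \<and> ((Y = convex hull (upv eps m' n') \<and> sig eps w + tau eps w \<le> of_int m' + of_int n' + 1)
       \<or> (Y = convex hull (dnv eps m' n') \<and> of_int m' + of_int n' + 1 \<le> sig eps w + tau eps w))"
        using cls_bounds[OF assms(1) Y] w unfolding w_def by blast
      have "m' = m" using int_squeeze[of m' "sig eps w" m] b s1 by auto
      moreover have "n' = n" using int_squeeze[of n' "tau eps w" n] b s2 by auto
      ultimately show "Y = X" using b s3 X by auto
    qed
  next
    assume X: "X = convex hull (dnv eps m n)"
    define g where "g = phi eps (m + 2/3) (n + 2/3)"
    have "g = (1/3) *\<^sub>R phi eps (m+1) n + (1/3) *\<^sub>R phi eps m (n+1) + (1/3) *\<^sub>R phi eps (m+1) (n+1)"
      unfolding g_def by (simp add: vec2_eq phi_1 phi_2 field_simps)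
    then have gX: "g \<in> X" unfolding X dnv_def convex_hull_3
      by (intro CollectI exI[of _ "1/3"]) auto
    have sg: "sig eps g = m + 2/3" "tau eps g = n + 2/3"
      unfolding g_def using sig_phi[OF assms(1)] tau_phi[OF assms(1)] by auto
    show ?thesis
    proof (intro bexI[OF _ gX] ballI allI impI)
      fix z t Y assume z: "z \<in> X" and t: "0 < t \<and> t \<le> 1" and Y: "Y \<in> tri eps"
        and w: "(1-t) *\<^sub>R z + t *\<^sub>R g \<in> Y"
      define w where "w = (1-t) *\<^sub>R z + t *\<^sub>R g"
      have bz: "m \<le> sig eps z \<and> sig eps z \<le> m+1 \<and> n \<le> tau eps z \<and> tau eps z \<le> n+1
          \<and> m+n+1 \<le> sig eps z + tau eps z \<and> sig eps z + tau eps z \<le> m+n+2"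
        using dn_bounds[OF assms(1), of z m n] z X by simp
      have s1: "m < sig eps w \<and> sig eps w < m + 1"
        unfolding w_def sig_comb sg using bz t by (intro strict_comb) auto
      have s2: "n < tau eps w \<and> tau eps w < n + 1"
        unfolding w_def tau_comb sg using bz t by (intro strict_comb) auto
      have s3: "m + n + 1 < sig eps w + tau eps w \<and> sig eps w + tau eps w < m + n + 2"
        unfolding w_def st_comb sg using bz t by (intro strict_comb) auto
      obtain m' n' where b: "of_int m' \<le> sig eps w \<and> sig eps w \<le> of_int m' + 1 \<and> of_int n' \<le> tau eps w \<and> tau eps w \<le> of_int n' + 1
     \<and> ((Y = convex hull (upv eps m' n') \<and> sig eps w + tau eps w \<le> of_int m' + of_int n' + 1)
       \<or> (Y = convex hull (dnv eps m' n') \<and> of_int m' + of_int n' + 1 \<le> sig eps w + tau eps w))"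
        using cls_bounds[OF assms(1) Y] w unfolding w_def by blast
      have "m' = m" using int_squeeze[of m' "sig eps w" m] b s1 by auto
      moreover have "n' = n" using int_squeeze[of n' "tau eps w" n] b s2 by auto
      ultimately show "Y = X" using b s3 X by auto
    qed
  qed
qed


lemma in_S_sub: assumes "eps > 0" "X \<in> tri eps" "S \<subseteq> tri eps" "X \<subseteq> \<Union>S" shows "X \<in> S"
proof -
  obtain g where g: "g \<in> X" "\<forall>z \<in> X. \<forall>t. 0 < t \<and> t \<le> 1 \<longrightarrow> (\<forall>Y \<in> tri eps. (1-t) *\<^sub>R z + t *\<^sub>R g \<in> Y \<longrightarrow> Y = X)"
    using gen_point[OF assms(1,2)] by blast
  obtain Y where Y: "Y \<in> S" "g \<in> Y" using assms(4) g(1) by blast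
  have "Y = X" using g(2)[rule_format, OF g(1), of 1 Y] Y assms(3) by auto
  then show ?thesis using Y by simp
qed

lemma in_S_int: assumes "eps > 0" "X \<in> tri eps" "S \<subseteq> tri eps" "z \<in> X" "z \<in> interior (\<Union>S)"
  shows "X \<in> S"
proof -
  obtain g where g: "g \<in> X" "\<forall>z \<in> X. \<forall>t. 0 < t \<and> t \<le> 1 \<longrightarrow> (\<forall>Y \<in> tri eps. (1-t) *\<^sub>R z + t *\<^sub>R g \<in> Y \<longrightarrow> Y = X)"
    using gen_point[OF assms(1,2)] by blast
  obtain r where r: "r > 0" "ball z r \<subseteq> \<Union>S" using assms(5) mem_interior by blast
  define d where "d = norm (g - z)"
  define t where "t = min 1 (r / (2*(d+1)))"
  have d0: "d \<ge> 0" unfolding d_def by simp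
  have t: "0 < t" "t \<le> 1" unfolding t_def using r d0 by auto
  have "t * d \<le> (r / (2*(d+1))) * d" unfolding t_def using d0 by (intro mult_right_mono) auto
  also have "\<dots> < r"
  proof -
    have "(r / (2*(d+1))) * d = r * (d / (2*(d+1)))" by simp
    moreover have "d / (2*(d+1)) < 1" using d0 by (simp add: field_simps)
    ultimately show ?thesis using r(1) by (metis mult_less_cancel_left_pos mult.right_neutral)
  qed
  finally have td: "t * d < r" .
  define w where "w = (1-t) *\<^sub>R z + t *\<^sub>R g"
  have "w - z = t *\<^sub>R (g - z)" unfolding w_def by (simp add: algebra_simps)
  then have "dist z w = t * d" unfolding d_def using t by (simp add: dist_norm norm_minus_commute)
  then have "w \<in> ball z r" using td by simp
  then obtain Y where Y: "Y \<in> S" "w \<in> Y" using r(2) by blast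
  have "Y = X" using g(2)[rule_format, OF assms(4), of t Y] Y assms(3) t unfolding w_def by auto
  then show ?thesis using Y by simp
qed

lemma ends_sub: "closed_segment i j \<subseteq> A \<Longrightarrow> i \<in> A \<and> j \<in> A"
  by auto

lemma nedg_in: assumes "eps > 0" "tri3 eps a b c" "e \<in> Nedg eps u" "e \<subseteq> convex hull {a,b,c}"
  shows "\<exists>i j. e = closed_segment i j \<and> i \<in> {a,b,c} \<and> j \<in> {a,b,c} \<and> i \<noteq> j \<and> u i = - u j"
proof -
  obtain i j where ij: "e = closed_segment i j" "i \<in> lat eps" "j \<in> lat eps" "dist i j = eps" "u i = - u j"
    using assms(3) unfolding Nedg_def by blast
  have "i \<in> e" "j \<in> e" unfolding ij(1) by (rule ends_in_segment)+
  then have "i \<in> convex hull {a,b,c}" "j \<in> convex hull {a,b,c}" using assms(4) by blast+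
  then have "i \<in> {a,b,c}" "j \<in> {a,b,c}" using lat_vert[OF assms(1,2)] ij(2,3) by simp_all
  moreover have "i \<noteq> j" using ij(4) assms(1) by auto
  ultimately show ?thesis using ij by blast
qed

lemma perm_distinct: assumes "{i,j,k} = {a,b,c::'a}" "a \<noteq> b" "b \<noteq> c" "a \<noteq> c" "i \<noteq> j"
  shows "k \<noteq> i \<and> k \<noteq> j"
proof (rule ccontr)
  assume "\<not> (k \<noteq> i \<and> k \<noteq> j)"
  then have "{i,j} = {a,b,c}" using assms(1) by auto
  then have "a \<in> {i,j}" "b \<in> {i,j}" "c \<in> {i,j}" by auto
  then show False using assms(2-4) by auto
qed

lemma nb_shape: assumes "eps > 0" "tri3 eps a b c" "neighbours eps u (convex hull {a,b,c}) Y"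
  shows "\<exists>i j k. {i,j,k} = {a,b,c} \<and> i \<noteq> j \<and> k \<noteq> i \<and> k \<noteq> j \<and> u i = - u j
     \<and> Y = convex hull {i,j,i+j-k} \<and> convex hull {a,b,c} \<inter> Y = closed_segment i j \<and> tri3 eps i j k"
proof -
  let ?X = "convex hull {a,b,c}"
  have N: "?X \<inter> Y \<in> Nedg eps u" "Y \<in> tri eps" using assms(3) unfolding neighbours_def by auto
  obtain i j where ij: "?X \<inter> Y = closed_segment i j" "i \<in> {a,b,c}" "j \<in> {a,b,c}" "i \<noteq> j" "u i = - u j"
    using nedg_in[OF assms(1,2) N(1)] by blast
  obtain k where k: "{i,j,k} = {a,b,c}" using third[OF ij(2,3,4)] by blast
  have dabc: "a \<noteq> b" "b \<noteq> c" "a \<noteq> c" using tri3_distinct[OF assms(1,2)] by auto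
  have kij: "k \<noteq> i" "k \<noteq> j" using perm_distinct[OF k dabc ij(4)] by auto
  have t3: "tri3 eps i j k" using tri3_perm[OF assms(2) k ij(4)] kij by auto
  obtain p q r where Y: "Y = convex hull {p,q,r}" "tri3 eps p q r" using N(2) tri_iff by blast
  have "i \<in> ?X \<inter> Y" "j \<in> ?X \<inter> Y" unfolding ij(1) by (rule ends_in_segment)+
  then have iY: "i \<in> Y" "j \<in> Y" by simp_all
  have ilat: "i \<in> lat eps" "j \<in> lat eps" using t3 unfolding tri3_def by auto
  have "i \<in> {p,q,r}" "j \<in> {p,q,r}" using lat_vert[OF assms(1) Y(2)] iY ilat Y(1) by auto
  then obtain y where y: "{i,j,y} = {p,q,r}" using third[of i p q r j] ij(4) by blast
  have dpqr: "p \<noteq> q" "q \<noteq> r" "p \<noteq> r" using tri3_distinct[OF assms(1) Y(2)] by auto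
  have yij: "y \<noteq> i" "y \<noteq> j" using perm_distinct[OF y dpqr ij(4)] by auto
  have t3y: "tri3 eps i j y" using tri3_perm[OF Y(2) y ij(4)] yij by auto
  have Yy: "Y = convex hull {i,j,y}" using Y(1) y by simp
  have "y = k \<or> y = i + j - k" using nb_unique[OF assms(1) t3 t3y] .
  moreover have "y \<noteq> k"
  proof
    assume "y = k"
    then have "Y = ?X" using Yy k by simp
    then have "?X = closed_segment i j" using ij(1) by simp
    moreover have "k \<in> {a,b,c}" using k by (metis insertCI)
    then have "k \<in> ?X" using hull_subset[of "{a,b,c}" convex] by (rule subsetD[rotated])
    ultimately show False using not_in_seg[OF assms(1) t3] by simp
  qed
  ultimately have Yf: "Y = convex hull {i,j,i+j-k}" using Yy by simp
  show ?thesis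
    apply (rule exI[of _ i], rule exI[of _ j], rule exI[of _ k])
    using k ij(1,4,5) kij t3 Yf by simp
qed

lemma nb_sym: "neighbours eps u X Y \<Longrightarrow> neighbours eps u Y X"
  unfolding neighbours_def by (simp add: Int_commute)

lemma opp_inj: assumes "{i1,j1,k} = {a,b,c}" "i1 \<noteq> j1" "k \<noteq> i1" "k \<noteq> j1"
  "{i2,j2,k} = {a,b,c}" "i2 \<noteq> j2" "k \<noteq> i2" "k \<noteq> j2"
  shows "convex hull {i1,j1,i1+j1-k} = convex hull {i2,j2,i2+j2-k}"
proof -
  have "{i1,j1} = {a,b,c} - {k}" using assms(1,3,4) by auto
  moreover have "{i2,j2} = {a,b,c} - {k}" using assms(5,7,8) by auto
  ultimately have "{i1,j1} = {i2,j2}" by simp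
  then have "(i1 = i2 \<and> j1 = j2) \<or> (i1 = j2 \<and> j1 = i2)" by (simp add: doubleton_eq_iff)
  then show ?thesis
  proof
    assume "i1 = i2 \<and> j1 = j2" then show ?thesis by simp
  next
    assume h: "i1 = j2 \<and> j1 = i2"
    then have "i1 + j1 - k = i2 + j2 - k" by (simp add: add.commute)
    moreover have "{i1,j1,i1 + j1 - k} = {i2,j2,i1 + j1 - k}" using h by blast
    ultimately show ?thesis by simp
  qed
qed


lemma last_visit:
  assumes "(G ^^ n) A Y"
  shows "Y = A \<or> (\<exists>A1 k. k < n \<and> G A A1 \<and> ((\<lambda>x y. G x y \<and> x \<noteq> A \<and> y \<noteq> A) ^^ k) A1 Y)"
  using assms
proof (induction n arbitrary: Y)
  case 0
  then show ?case by simp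
next
  case (Suc n)
  from Suc.prems obtain X where X: "(G ^^ n) A X" "G X Y" by auto
  show ?case
  proof (cases "Y = A")
    case True then show ?thesis by simp
  next
    case YA: False
    show ?thesis
    proof (cases "X = A")
      case True
      then show ?thesis using X YA by (intro disjI2 exI[of _ Y] exI[of _ 0]) auto
    next
      case False
      from Suc.IH[OF X(1)] False obtain A1 k where k: "k < n" "G A A1"
        "((\<lambda>x y. G x y \<and> x \<noteq> A \<and> y \<noteq> A) ^^ k) A1 X" by auto
      then have "((\<lambda>x y. G x y \<and> x \<noteq> A \<and> y \<noteq> A) ^^ Suc k) A1 Y"
        using X(2) False YA by auto
      then show ?thesis using k by blast
    qed
  qed
qed

lemma first_step:
  assumes "(G ^^ n) A Y" "A \<noteq> Y" shows "\<exists>z. G A z"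
  using assms by (metis relpowp_imp_rtranclp converse_rtranclpE)

lemma graph3:
  assumes "(G ^^ n) A B" "G\<^sup>*\<^sup>* A C"
    and "\<And>x y. G x y \<Longrightarrow> G y x"
    and "\<And>x y1 y2 y3. G x y1 \<Longrightarrow> G x y2 \<Longrightarrow> G x y3 \<Longrightarrow> y1 = y2 \<or> y1 = y3 \<or> y2 = y3"
    and "\<And>y1 y2. G A y1 \<Longrightarrow> G A y2 \<Longrightarrow> y1 = y2"
    and "\<And>y1 y2. G B y1 \<Longrightarrow> G B y2 \<Longrightarrow> y1 = y2"
    and "\<And>y1 y2. G C y1 \<Longrightarrow> G C y2 \<Longrightarrow> y1 = y2"
    and "A \<noteq> B" "A \<noteq> C" "B \<noteq> C"
  shows False
  using assms
proof (induction n arbitrary: G A B C rule: less_induct)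
  case (less n)
  define G' where "G' = (\<lambda>x y. G x y \<and> x \<noteq> A \<and> y \<noteq> A)"
  from last_visit[OF less.prems(1)] less.prems(8) obtain A1 k where
    k: "k < n" "G A A1" "(G' ^^ k) A1 B" unfolding G'_def by auto
  from less.prems(2) obtain m where "(G ^^ m) A C" by (metis rtranclp_power)
  from last_visit[OF this] less.prems(9) obtain A2 k2 where
    k2: "G A A2" "(G' ^^ k2) A2 C" unfolding G'_def by auto
  have "A2 = A1" using less.prems(5) k(2) k2(1) by blast
  with k2 have c: "G'\<^sup>*\<^sup>* A1 C" by (metis relpowp_imp_rtranclp)
  have AB: "A1 \<noteq> B"
  proof
    assume "A1 = B"
    have "B \<noteq> C" by fact
    then obtain z where "G' B z" using c \<open>A1 = B\<close> by (metis converse_rtranclpE)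
    then have "G B z" "z \<noteq> A" unfolding G'_def by auto
    moreover have "G B A" using less.prems(3) k(2) \<open>A1 = B\<close> by blast
    ultimately show False using less.prems(6) by blast
  qed
  have AC: "A1 \<noteq> C"
  proof
    assume "A1 = C"
    have "C \<noteq> B" using less.prems(10) by auto
    then obtain z where "G' C z" using first_step[OF k(3)] \<open>A1 = C\<close> by auto
    then have "G C z" "z \<noteq> A" unfolding G'_def by auto
    moreover have "G C A" using less.prems(3) k(2) \<open>A1 = C\<close> by blast
    ultimately show False using less.prems(7) by blast
  qed
  show False
  proof (rule less.IH[OF k(1) k(3) c])
    show "\<And>x y. G' x y \<Longrightarrow> G' y x" using less.prems(3) unfolding G'_def by blast
    show "\<And>x y1 y2 y3. G' x y1 \<Longrightarrow> G' x y2 \<Longrightarrow> G' x y3 \<Longrightarrow> y1 = y2 \<or> y1 = y3 \<or> y2 = y3"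
      using less.prems(4) unfolding G'_def by blast
    show "\<And>y1 y2. G' A1 y1 \<Longrightarrow> G' A1 y2 \<Longrightarrow> y1 = y2"
    proof -
      fix y1 y2 assume "G' A1 y1" "G' A1 y2"
      moreover have "G A1 A" using less.prems(3) k(2) by blast
      ultimately show "y1 = y2" using less.prems(4)[of A1 y1 y2 A] unfolding G'_def by blast
    qed
    show "\<And>y1 y2. G' B y1 \<Longrightarrow> G' B y2 \<Longrightarrow> y1 = y2" using less.prems(6) unfolding G'_def by blast
    show "\<And>y1 y2. G' C y1 \<Longrightarrow> G' C y2 \<Longrightarrow> y1 = y2" using less.prems(7) unfolding G'_def by blast
  qed (use AB AC less.prems(10) in auto)
qed


lemma SF_norm: "u \<in> SF eps \<Omega> \<Longrightarrow> i \<in> lat eps \<Longrightarrow> norm (u i) = 1"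
  unfolding SF_def by auto

lemma SF_anti_self: assumes "u \<in> SF eps \<Omega>" "i \<in> lat eps" shows "u i \<noteq> - u i"
proof
  assume "u i = - u i"
  then have "2 *\<^sub>R u i = 0" by (metis scaleR_2 add.right_inverse)
  then have "u i = 0" by simp
  then show False using SF_norm[OF assms] by simp
qed

lemma seg_ends: "X \<inter> Y = closed_segment i j \<Longrightarrow> i \<in> X \<and> j \<in> X \<and> i \<in> Y \<and> j \<in> Y"
  by (metis IntD1 IntD2 ends_in_segment)

lemma tri3_refl: assumes "tri3 eps i j k" shows "tri3 eps i j (i + j - k)"
proof -
  have "dist j (i + j - k) = norm (k - i)" by (simp add: dist_norm algebra_simps)
  moreover have "dist i (i + j - k) = norm (k - j)" by (simp add: dist_norm algebra_simps)
  ultimately show ?thesis using assms lat_comb unfolding tri3_def by (simp add: dist_norm norm_minus_commute)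
qed

lemma not_refl_vertex: assumes "eps > 0" "tri3 eps a b c" shows "a \<noteq> b + c - a"
proof
  assume h: "a = b + c - a"
  then have "b - c = 2 *\<^sub>R (a - c)" by (simp add: algebra_simps scaleR_2)
  then have "dist b c = 2 * dist a c" by (simp add: dist_norm)
  then show False using assms unfolding tri3_def by simp
qed

definition goodp :: "real \<Rightarrow> (real^2 \<Rightarrow> real^3) \<Rightarrow> real^3 \<Rightarrow> (real^2) set \<Rightarrow> bool" where
  "goodp eps u p X \<longleftrightarrow> X \<in> tri eps \<and>
     (\<forall>i \<in> lat eps \<inter> X. \<forall>j \<in> lat eps \<inter> X. u i = - u j \<longrightarrow> u i = p \<or> u i = - p)"

lemma good_step: assumes "eps > 0" "u \<in> SF eps \<Omega>" "goodp eps u p X" "neighbours eps u X Y"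
  shows "goodp eps u p Y"
proof -
  have "X \<in> tri eps" using assms(3) unfolding goodp_def by simp
  then obtain a b c where X: "X = convex hull {a,b,c}" "tri3 eps a b c" using tri_iff by blast
  obtain i j k where s: "{i,j,k} = {a,b,c}" "i \<noteq> j" "k \<noteq> i" "k \<noteq> j" "u i = - u j"
     "Y = convex hull {i,j,i+j-k}" "X \<inter> Y = closed_segment i j" "tri3 eps i j k"
    using nb_shape[OF assms(1) X(2), of u Y] assms(4) unfolding X(1) by blast
  have ij: "i \<in> lat eps \<inter> X" "j \<in> lat eps \<inter> X" using seg_ends[OF s(7)] tri3_lat[OF s(8)] by simp_all
  have ui: "u i = p \<or> u i = - p" using assms(3) ij s(5) unfolding goodp_def by blast
  have uj: "u j = p \<or> u j = - p" using ui s(5) by (metis minus_minus)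
  have t3: "tri3 eps i j (i+j-k)" using tri3_refl[OF s(8)] .
  have Ytri: "Y \<in> tri eps" using assms(4) unfolding neighbours_def by auto
  have ylat: "i + j - k \<in> lat eps" using t3 unfolding tri3_def by auto
  have "\<forall>q \<in> lat eps \<inter> Y. \<forall>r \<in> lat eps \<inter> Y. u q = - u r \<longrightarrow> u q = p \<or> u q = - p"
  proof (intro ballI impI)
    fix q r assume q: "q \<in> lat eps \<inter> Y" and r: "r \<in> lat eps \<inter> Y" and qr: "u q = - u r"
    have qv: "q \<in> {i,j,i+j-k}" "r \<in> {i,j,i+j-k}" using lat_vert[OF assms(1) t3, of q] lat_vert[OF assms(1) t3, of r] q r unfolding s(6) by simp_all
    show "u q = p \<or> u q = - p"
    proof (cases "q = i + j - k")
      case False then show ?thesis using qv ui uj by auto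
    next
      case True
      have "r \<noteq> q" using qr SF_anti_self[OF assms(2)] q by auto
      then have "u r = p \<or> u r = - p" using qv ui uj True by auto
      then show ?thesis using qr by auto
    qed
  qed
  then show ?thesis using Ytri unfolding goodp_def by blast
qed

lemma deg1: assumes "eps > 0" "goodp eps u p X" "v \<in> lat eps \<inter> X" "u v \<noteq> p" "u v \<noteq> - p"
  "neighbours eps u X Y1" "neighbours eps u X Y2" shows "Y1 = Y2"
proof -
  have "X \<in> tri eps" using assms(2) unfolding goodp_def by simp
  then obtain a b c where X: "X = convex hull {a,b,c}" "tri3 eps a b c" using tri_iff by blast
  have v: "v \<in> {a,b,c}" using lat_vert[OF assms(1) X(2), of v] assms(3) X(1) by simp
  obtain i1 j1 k1 where s1: "{i1,j1,k1} = {a,b,c}" "i1 \<noteq> j1" "k1 \<noteq> i1" "k1 \<noteq> j1" "u i1 = - u j1"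
     "Y1 = convex hull {i1,j1,i1+j1-k1}" "X \<inter> Y1 = closed_segment i1 j1" "tri3 eps i1 j1 k1"
    using nb_shape[OF assms(1) X(2), of u Y1] assms(6) unfolding X(1) by blast
  obtain i2 j2 k2 where s2: "{i2,j2,k2} = {a,b,c}" "i2 \<noteq> j2" "k2 \<noteq> i2" "k2 \<noteq> j2" "u i2 = - u j2"
     "Y2 = convex hull {i2,j2,i2+j2-k2}" "X \<inter> Y2 = closed_segment i2 j2" "tri3 eps i2 j2 k2"
    using nb_shape[OF assms(1) X(2), of u Y2] assms(7) unfolding X(1) by blast
  have l1: "i1 \<in> lat eps \<inter> X" "j1 \<in> lat eps \<inter> X" using seg_ends[OF s1(7)] tri3_lat[OF s1(8)] by simp_all
  have l2: "i2 \<in> lat eps \<inter> X" "j2 \<in> lat eps \<inter> X" using seg_ends[OF s2(7)] tri3_lat[OF s2(8)] by simp_all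
  have g: "\<And>q r. q \<in> lat eps \<inter> X \<Longrightarrow> r \<in> lat eps \<inter> X \<Longrightarrow> u q = - u r \<Longrightarrow> u q = p \<or> u q = - p"
    using assms(2) unfolding goodp_def by blast
  have e1: "u j1 = - u i1" using s1(5) by simp
  have e2: "u j2 = - u i2" using s2(5) by simp
  have "u i1 = p \<or> u i1 = - p" using g[OF l1 s1(5)] .
  then have "i1 \<noteq> v" using assms(4,5) by auto
  moreover have "u j1 = p \<or> u j1 = - p" using g[OF l1(2) l1(1) e1] .
  then have "j1 \<noteq> v" using assms(4,5) by auto
  moreover have "v \<in> {i1,j1,k1}" using s1(1) v by simp
  ultimately have k1: "k1 = v" by auto
  have "u i2 = p \<or> u i2 = - p" using g[OF l2 s2(5)] .
  then have "i2 \<noteq> v" using assms(4,5) by auto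
  moreover have "u j2 = p \<or> u j2 = - p" using g[OF l2(2) l2(1) e2] .
  then have "j2 \<noteq> v" using assms(4,5) by auto
  moreover have "v \<in> {i2,j2,k2}" using s2(1) v by simp
  ultimately have k2: "k2 = v" by auto
  have h1: "{i1,j1,v} = {a,b,c}" "v \<noteq> i1" "v \<noteq> j1" using s1(1,3,4) k1 by simp_all
  have h2: "{i2,j2,v} = {a,b,c}" "v \<noteq> i2" "v \<noteq> j2" using s2(1,3,4) k2 by simp_all
  have "convex hull {i1,j1,i1+j1-v} = convex hull {i2,j2,i2+j2-v}"
    by (rule opp_inj[OF h1(1) s1(2) h1(2,3) h2(1) s2(2) h2(2,3)])
  then show ?thesis using s1(6) s2(6) k1 k2 by simp
qed


lemma anti_k: fixes u :: "real^2 \<Rightarrow> real^3" assumes "{i,j,k} = {a,b,c}" "k \<noteq> i" "k \<noteq> j" "u i = - u j"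
  "x \<in> {a,b,c}" "y \<in> {a,b,c}" "x \<noteq> k" "y \<noteq> k" "x \<noteq> y"
  shows "u x = - u y"
proof -
  have "x \<in> {i,j,k}" "y \<in> {i,j,k}" using assms(1,5,6) by simp_all
  then have "x = i \<or> x = j" "y = i \<or> y = j" using assms(7,8) by simp_all
  then have "(x = i \<and> y = j) \<or> (x = j \<and> y = i)" using assms(9) by blast
  then show ?thesis using assms(4) by (metis minus_minus)
qed

lemma pig3: "k1 \<in> {a,b,c} \<Longrightarrow> k2 \<in> {a,b,c} \<Longrightarrow> k3 \<in> {a,b,c} \<Longrightarrow> k1 \<noteq> k2 \<Longrightarrow> k1 \<noteq> k3 \<Longrightarrow> k2 \<noteq> k3
  \<Longrightarrow> x \<in> {a,b,c} \<Longrightarrow> x = k1 \<or> x = k2 \<or> x = k3"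
  by auto

lemma deg2: assumes "eps > 0" "u \<in> SF eps \<Omega>" "neighbours eps u X Y1" "neighbours eps u X Y2" "neighbours eps u X Y3"
  shows "Y1 = Y2 \<or> Y1 = Y3 \<or> Y2 = Y3"
proof (rule ccontr)
  assume dis: "\<not> (Y1 = Y2 \<or> Y1 = Y3 \<or> Y2 = Y3)"
  have "X \<in> tri eps" using assms(3) unfolding neighbours_def by simp
  then obtain a b c where X: "X = convex hull {a,b,c}" "tri3 eps a b c" using tri_iff by blast
  obtain i1 j1 k1 where s1: "{i1,j1,k1} = {a,b,c}" "i1 \<noteq> j1" "k1 \<noteq> i1" "k1 \<noteq> j1" "u i1 = - u j1"
     "Y1 = convex hull {i1,j1,i1+j1-k1}"
    using nb_shape[OF assms(1) X(2), of u Y1] assms(3) unfolding X(1) by blast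
  obtain i2 j2 k2 where s2: "{i2,j2,k2} = {a,b,c}" "i2 \<noteq> j2" "k2 \<noteq> i2" "k2 \<noteq> j2" "u i2 = - u j2"
     "Y2 = convex hull {i2,j2,i2+j2-k2}"
    using nb_shape[OF assms(1) X(2), of u Y2] assms(4) unfolding X(1) by blast
  obtain i3 j3 k3 where s3: "{i3,j3,k3} = {a,b,c}" "i3 \<noteq> j3" "k3 \<noteq> i3" "k3 \<noteq> j3" "u i3 = - u j3"
     "Y3 = convex hull {i3,j3,i3+j3-k3}"
    using nb_shape[OF assms(1) X(2), of u Y3] assms(5) unfolding X(1) by blast
  have k12: "k1 \<noteq> k2"
  proof
    assume h: "k1 = k2"
    have "convex hull {i1,j1,i1+j1-k1} = convex hull {i2,j2,i2+j2-k1}"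
      by (rule opp_inj[OF s1(1-4)]) (use s2(1-4) h in simp_all)
    then show False using dis s1(6) s2(6) h by simp
  qed
  have k13: "k1 \<noteq> k3"
  proof
    assume h: "k1 = k3"
    have "convex hull {i1,j1,i1+j1-k1} = convex hull {i3,j3,i3+j3-k1}"
      by (rule opp_inj[OF s1(1-4)]) (use s3(1-4) h in simp_all)
    then show False using dis s1(6) s3(6) h by simp
  qed
  have k23: "k2 \<noteq> k3"
  proof
    assume h: "k2 = k3"
    have "convex hull {i2,j2,i2+j2-k2} = convex hull {i3,j3,i3+j3-k2}"
      by (rule opp_inj[OF s2(1-4)]) (use s3(1-4) h in simp_all)
    then show False using dis s2(6) s3(6) h by simp
  qed
  have km: "k1 \<in> {a,b,c}" "k2 \<in> {a,b,c}" "k3 \<in> {a,b,c}"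
    using s1(1) s2(1) s3(1) by (metis insertCI)+
  have d: "a \<noteq> b" "b \<noteq> c" "a \<noteq> c" using tri3_distinct[OF assms(1) X(2)] by auto
  have anti: "\<And>x y z. z \<in> {a,b,c} \<Longrightarrow> x \<in> {a,b,c} \<Longrightarrow> y \<in> {a,b,c} \<Longrightarrow> x \<noteq> z \<Longrightarrow> y \<noteq> z \<Longrightarrow> x \<noteq> y \<Longrightarrow> u x = - u y"
  proof -
    fix x y z assume z: "z \<in> {a,b,c}" and xy: "x \<in> {a,b,c}" "y \<in> {a,b,c}" "x \<noteq> z" "y \<noteq> z" "x \<noteq> y"
    have "z = k1 \<or> z = k2 \<or> z = k3" using pig3[OF km k12 k13 k23 z] .
    then show "u x = - u y"
    proof (elim disjE)
      assume "z = k1" then show ?thesis using anti_k[OF s1(1,3,4,5) xy(1,2)] xy(3-5) by simp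
    next
      assume "z = k2" then show ?thesis using anti_k[OF s2(1,3,4,5) xy(1,2)] xy(3-5) by simp
    next
      assume "z = k3" then show ?thesis using anti_k[OF s3(1,3,4,5) xy(1,2)] xy(3-5) by simp
    qed
  qed
  have "u a = - u b" using anti[of c a b] d by auto
  moreover have "u a = - u c" using anti[of b a c] d by auto
  moreover have "u b = - u c" using anti[of a b c] d by auto
  ultimately have "u c = - u c" by (metis minus_minus)
  moreover have "c \<in> lat eps" using X(2) unfolding tri3_def by simp
  ultimately show False using SF_anti_self[OF assms(2)] by blast
qed


lemma good_reach: assumes "eps > 0" "u \<in> SF eps \<Omega>" "(neighbours eps u)\<^sup>*\<^sup>* T Y" "goodp eps u p T"
  shows "goodp eps u p Y"
  using assms(3,4)
proof (induction rule: rtranclp_induct)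
  case base then show ?case by simp
next
  case (step y z) then show ?case using good_step[OF assms(1,2)] by blast
qed

lemma in_hull3: "x \<in> {a,b,c} \<Longrightarrow> x \<in> convex hull {a,b,c}"
  using hull_subset[of "{a,b,c}" convex] by blast

lemma core:
  fixes u :: "real^2 \<Rightarrow> real^3"
  assumes e: "eps > 0" and uS: "u \<in> SF eps \<Omega>" and t3: "tri3 eps a b c" and ab: "u a = - u b"
    and ca: "u c \<noteq> u a" and cb: "u c \<noteq> u b" and pw: "pw_connected eps u S"
    and TS: "convex hull {a,b,c} \<in> S"
  shows "\<not> (convex hull {b,c,b+c-a} \<in> S \<and> convex hull {a,c,a+c-b} \<in> S)
    \<and> (convex hull {b,c,b+c-a} \<in> S \<longrightarrow> u ` (lat eps \<inter> \<Union>S) \<subseteq> {u a, u b, u c})"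
proof -
  define G where "G = neighbours eps u"
  define T where "T = convex hull {a,b,c}"
  define T2 where "T2 = convex hull {b,c,b+c-a}"
  define T3 where "T3 = convex hull {a,c,a+c-b}"
  have ba: "u b = - u a" using ab by simp
  have Gsym: "\<And>x y. G x y \<Longrightarrow> G y x" unfolding G_def by (rule nb_sym)
  have Gdeg2: "\<And>x y1 y2 y3. G x y1 \<Longrightarrow> G x y2 \<Longrightarrow> G x y3 \<Longrightarrow> y1 = y2 \<or> y1 = y3 \<or> y2 = y3"
    unfolding G_def using deg2[OF e uS] by blast
  have reach: "\<And>Y. Y \<in> S \<Longrightarrow> G\<^sup>*\<^sup>* T Y"
    using pw TS unfolding pw_connected_def tconnected_def G_def T_def by blast
  have Ttri: "T \<in> tri eps" unfolding T_def using t3 tri_iff by blast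
  have labc: "a \<in> lat eps" "b \<in> lat eps" "c \<in> lat eps" using t3 unfolding tri3_def by auto
  have goodT: "goodp eps u (u a) T"
    unfolding goodp_def
  proof (intro conjI ballI impI)
    show "T \<in> tri eps" by (rule Ttri)
    fix i j assume i: "i \<in> lat eps \<inter> T" and j: "j \<in> lat eps \<inter> T" and ij: "u i = - u j"
    have "i \<in> convex hull {a,b,c}" "j \<in> convex hull {a,b,c}" using i j unfolding T_def by auto
    then have iv: "i \<in> {a,b,c}" "j \<in> {a,b,c}" using lat_vert[OF e t3] i j by auto
    have "i \<noteq> c"
    proof
      assume "i = c"
      then have "u c = - u j" using ij by simp
      moreover have "u c \<noteq> - u c" using SF_anti_self[OF uS labc(3)] .
      moreover have "u c \<noteq> - u a" using cb ba by simp
      moreover have "u c \<noteq> - u b" using ca ab by simp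
      ultimately show False using iv(2) by auto
    qed
    then show "u i = u a \<or> u i = - u a" using iv(1) ba by auto
  qed
  have good: "\<And>Y. G\<^sup>*\<^sup>* T Y \<Longrightarrow> goodp eps u (u a) Y"
    unfolding G_def using good_reach[OF e uS _ goodT] by blast
  have D1: "\<And>X v y1 y2. G\<^sup>*\<^sup>* T X \<Longrightarrow> v \<in> lat eps \<inter> X \<Longrightarrow> u v \<noteq> u a \<Longrightarrow> u v \<noteq> - u a \<Longrightarrow>
      G X y1 \<Longrightarrow> G X y2 \<Longrightarrow> y1 = y2"
    unfolding G_def using deg1[OF e] good unfolding G_def by blast
  have t3b: "tri3 eps b c (b+c-a)" using tri3_refl[OF tri3_rot[OF t3]] .
  have t3a: "tri3 eps a c b" using tri3_rot[OF tri3_swap12[OF t3]] .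
  have t3c: "tri3 eps a c (a+c-b)" using tri3_refl[OF t3a] .
  have T2tri: "T2 \<in> tri eps" unfolding T2_def using t3b tri_iff by blast
  have T3tri: "T3 \<in> tri eps" unfolding T3_def using t3c tri_iff by blast
  have cT: "c \<in> lat eps \<inter> T" "c \<in> lat eps \<inter> T2" "c \<in> lat eps \<inter> T3"
    unfolding T_def T2_def T3_def using labc in_hull3 by auto
  have cna: "u c \<noteq> - u a" using cb ba by simp
  have nr1: "a \<noteq> b + c - a" using not_refl_vertex[OF e t3] .
  have nr2: "b \<noteq> a + c - b" using not_refl_vertex[OF e tri3_swap12[OF t3]] .
  have dabc: "a \<noteq> b" "b \<noteq> c" "a \<noteq> c" using tri3_distinct[OF e t3] by auto
  have aT2: "a \<notin> T2"
  proof
    assume h: "a \<in> T2"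
    have "a \<in> {b,c,b+c-a}" by (rule lat_vert[OF e t3b labc(1)]) (use h in \<open>simp add: T2_def\<close>)
    then show False using nr1 dabc by auto
  qed
  have TT2: "T \<noteq> T2" using aT2 in_hull3[of a a b c] unfolding T_def by auto
  have T2T3: "T2 \<noteq> T3" using aT2 in_hull3[of a a c "a+c-b"] unfolding T3_def by auto
  have TT3: "T \<noteq> T3"
  proof
    assume "T = T3"
    then have h: "b \<in> T3" using in_hull3[of b a b c] unfolding T_def by auto
    have "b \<in> {a,c,a+c-b}" by (rule lat_vert[OF e t3c labc(2)]) (use h in \<open>simp add: T3_def\<close>)
    then show False using nr2 dabc by auto
  qed
  have degT: "\<And>y1 y2. G T y1 \<Longrightarrow> G T y2 \<Longrightarrow> y1 = y2"
    using D1[OF rtranclp.rtrancl_refl cT(1) ca cna] by blast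
  have part1: "\<not> (T2 \<in> S \<and> T3 \<in> S)"
  proof
    assume h: "T2 \<in> S \<and> T3 \<in> S"
    have r2: "G\<^sup>*\<^sup>* T T2" "G\<^sup>*\<^sup>* T T3" using reach h by auto
    obtain n where n: "(G ^^ n) T T2" using r2(1) by (metis rtranclp_power)
    have d2: "\<And>y1 y2. G T2 y1 \<Longrightarrow> G T2 y2 \<Longrightarrow> y1 = y2"
      using D1[OF r2(1) cT(2) ca cna] by blast
    have d3: "\<And>y1 y2. G T3 y1 \<Longrightarrow> G T3 y2 \<Longrightarrow> y1 = y2"
      using D1[OF r2(2) cT(3) ca cna] by blast
    show False by (rule graph3[OF n r2(2) Gsym Gdeg2 degT d2 d3 TT2 TT3 T2T3])
  qed
  have part2: "u ` (lat eps \<inter> \<Union>S) \<subseteq> {u a, u b, u c}" if T2S: "T2 \<in> S"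
  proof -
    have r2: "G\<^sup>*\<^sup>* T T2" using reach T2S by auto
    obtain n where n: "(G ^^ n) T T2" using r2 by (metis rtranclp_power)
    have d2: "\<And>y1 y2. G T2 y1 \<Longrightarrow> G T2 y2 \<Longrightarrow> y1 = y2"
      using D1[OF r2(1) cT(2) ca cna] by blast
    obtain W where W: "G W T2" using r2 TT2 by (metis rtranclp.cases)
    have "G T2 W" using Gsym[OF W] .
    then obtain i j k where s: "{i,j,k} = {b,c,b+c-a}" "i \<noteq> j" "k \<noteq> i" "k \<noteq> j" "u i = - u j"
       "T2 \<inter> W = closed_segment i j" "tri3 eps i j k"
      using nb_shape[OF e t3b, of u W] unfolding G_def T2_def by blast
    have ij: "i \<in> lat eps \<inter> T2" "j \<in> lat eps \<inter> T2" using seg_ends[OF s(6)] tri3_lat[OF s(7)] by simp_all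
    have gT2: "goodp eps u (u a) T2" using good[OF r2] .
    have ji: "u j = - u i" using s(5) by simp
    have ui: "u i = u a \<or> u i = - u a" using gT2 ij s(5) unfolding goodp_def by blast
    have uj: "u j = u a \<or> u j = - u a" using gT2 ij ji unfolding goodp_def by blast
    have "i \<noteq> c" using ui ca cna by auto
    moreover have "j \<noteq> c" using uj ca cna by auto
    moreover have "i \<in> {b,c,b+c-a}" "j \<in> {b,c,b+c-a}" using s(1) by (metis insertCI)+
    ultimately have "(i = b \<and> j = b+c-a) \<or> (i = b+c-a \<and> j = b)" using s(2) by auto
    then have ud: "u (b+c-a) = u a"
    proof
      assume "i = b \<and> j = b+c-a" then show ?thesis using ji ba by (metis minus_minus)
    next
      assume "i = b+c-a \<and> j = b" then show ?thesis using s(5) ba by (metis minus_minus)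
    qed
    show "u ` (lat eps \<inter> \<Union>S) \<subseteq> {u a, u b, u c}"
    proof
      fix x assume "x \<in> u ` (lat eps \<inter> \<Union>S)"
      then obtain z where z: "z \<in> lat eps" "z \<in> \<Union>S" "x = u z" by blast
      show "x \<in> {u a, u b, u c}"
      proof (rule ccontr)
        assume nx: "x \<notin> {u a, u b, u c}"
        obtain Y where Y: "Y \<in> S" "z \<in> Y" using z(2) by blast
        have rY: "G\<^sup>*\<^sup>* T Y" using reach Y(1) .
        have zna: "u z \<noteq> u a" "u z \<noteq> - u a" using nx z(3) ba by auto
        have dY: "\<And>y1 y2. G Y y1 \<Longrightarrow> G Y y2 \<Longrightarrow> y1 = y2"
          using D1[OF rY _ zna] z(1) Y(2) by blast
        have TY: "T \<noteq> Y"
        proof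
          assume "T = Y"
          then have "z \<in> convex hull {a,b,c}" using Y(2) unfolding T_def by simp
          then have "z \<in> {a,b,c}" by (rule lat_vert[OF e t3 z(1)])
          then show False using nx z(3) by auto
        qed
        have T2Y: "T2 \<noteq> Y"
        proof
          assume "T2 = Y"
          then have "z \<in> convex hull {b,c,b+c-a}" using Y(2) unfolding T2_def by simp
          then have "z \<in> {b,c,b+c-a}" by (rule lat_vert[OF e t3b z(1)])
          then show False using nx z(3) ud by auto
        qed
        show False by (rule graph3[OF n rY Gsym Gdeg2 degT d2 dY TT2 TY T2Y])
      qed
    qed
  qed
  show ?thesis using part1 part2 unfolding T2_def T3_def by simp
qed


lemma seg_sub_hull: "x \<in> {a,b,c} \<Longrightarrow> y \<in> {a,b,c} \<Longrightarrow> closed_segment x y \<subseteq> convex hull {a,b,c}"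
  unfolding segment_convex_hull by (intro hull_mono) auto

lemma bdry:
  assumes e: "eps > 0" and t3: "tri3 eps a b c" and T: "T = convex hull {a,b,c}"
    and nN: "closed_segment b c \<notin> Nedg eps u" and St: "S \<subseteq> tri eps" and R: "R = \<Union>S" and TR: "T \<subseteq> R"
    and nS: "convex hull {b,c,b+c-a} \<notin> S"
  shows "bdry_edge eps u R (closed_segment b c) \<and> closed_segment b c \<subseteq> T"
proof -
  have lab: "b \<in> lat eps" "c \<in> lat eps" "dist b c = eps" using t3 unfolding tri3_def by auto
  have "closed_segment b c \<in> edg eps" unfolding edg_def using lab by blast
  then have C: "closed_segment b c \<in> Cedg eps u" unfolding Cedg_def using nN by blast
  have t3b: "tri3 eps b c (b+c-a)" using tri3_refl[OF tri3_rot[OF t3]] .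
  have T2: "convex hull {b,c,b+c-a} \<in> tri eps" using t3b tri_iff by blast
  have Ttri: "T \<in> tri eps" using t3 tri_iff T by blast
  have int: "convex hull {b,c,b+c-a} \<subseteq> - interior R"
  proof
    fix z assume z: "z \<in> convex hull {b,c,b+c-a}"
    show "z \<in> - interior R"
    proof
      assume "z \<in> interior R"
      then have "convex hull {b,c,b+c-a} \<in> S" using in_S_int[OF e T2 St z] R by simp
      then show False using nS by simp
    qed
  qed
  have "convex hull {b,c,a} \<inter> convex hull {b,c,b+c-a} = closed_segment b c"
    using tri_inter[OF e tri3_rot[OF t3]] .
  moreover have "convex hull {b,c,a} = T" unfolding T by (simp add: insert_commute)
  ultimately have I: "T \<inter> convex hull {b,c,b+c-a} = closed_segment b c" by simp
  have "bdry_edge eps u R (closed_segment b c)"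
    unfolding bdry_edge_def using C Ttri TR T2 int I by blast
  moreover have "closed_segment b c \<subseteq> T" unfolding T by (rule seg_sub_hull) auto
  ultimately show ?thesis by simp
qed

lemma card3: "card {p,q,r::'a} \<le> 3"
  by (simp add: card_insert_if)

theorem lemma5p4:
  fixes eps :: real and \<Omega> :: "(real^2) set" and u :: "real^2 \<Rightarrow> real^3"
    and R T :: "(real^2) set"
  assumes "eps > 0" and "bounded \<Omega>" and "open \<Omega>"
    and "u \<in> SF eps \<Omega>" and "R \<in> regions eps u"
    and "T \<in> tri eps" and "T \<subseteq> R"
  shows "(card {e \<in> Nedg eps u. e \<subseteq> T} = 1 \<longrightarrow> (\<exists>e. bdry_edge eps u R e \<and> e \<subseteq> T))
       \<and> (card {e \<in> Nedg eps u. e \<subseteq> T} = 1 \<and> card (u ` (lat eps \<inter> R)) = 4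
            \<longrightarrow> (\<exists>e1 e2. e1 \<noteq> e2 \<and> bdry_edge eps u R e1 \<and> e1 \<subseteq> T
                        \<and> bdry_edge eps u R e2 \<and> e2 \<subseteq> T))"
proof -
  note e = assms(1)
  obtain S where pw: "pw_connected eps u S" and R: "R = \<Union>S"
    using assms(5) unfolding regions_def by blast
  have St: "S \<subseteq> tri eps" using pw unfolding pw_connected_def by simp
  have TS: "T \<in> S" using in_S_sub[OF e assms(6) St] assms(7) R by simp
  obtain a0 b0 c0 where T0: "T = convex hull {a0,b0,c0}" "tri3 eps a0 b0 c0"
    using assms(6) tri_iff by blast
  define E where "E = {e \<in> Nedg eps u. e \<subseteq> T}"
  have key: "\<exists>a b c. T = convex hull {a,b,c} \<and> tri3 eps a b c \<and> u a = - u b \<and> u c \<noteq> u a \<and> u c \<noteq> u b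
      \<and> closed_segment b c \<notin> Nedg eps u \<and> closed_segment a c \<notin> Nedg eps u" if c1: "card E = 1"
  proof -
    obtain e0 where E0: "E = {e0}" using c1 card_1_singletonE by blast
    then have e0: "e0 \<in> Nedg eps u" "e0 \<subseteq> T" unfolding E_def by auto
    obtain i j where ij: "e0 = closed_segment i j" "i \<in> {a0,b0,c0}" "j \<in> {a0,b0,c0}" "i \<noteq> j" "u i = - u j"
      using nedg_in[OF e T0(2) e0(1)] e0(2) T0(1) by blast
    obtain k where k: "{i,j,k} = {a0,b0,c0}" using third[OF ij(2,3,4)] by blast
    have d0: "a0 \<noteq> b0" "b0 \<noteq> c0" "a0 \<noteq> c0" using tri3_distinct[OF e T0(2)] by auto
    have kij: "k \<noteq> i" "k \<noteq> j" using perm_distinct[OF k d0 ij(4)] by auto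
    have t3: "tri3 eps i j k" using tri3_perm[OF T0(2) k ij(4)] kij by auto
    have T: "T = convex hull {i,j,k}" using T0(1) k by simp
    have lat: "i \<in> lat eps" "j \<in> lat eps" "k \<in> lat eps" "dist j k = eps" "dist i k = eps"
      using t3 unfolding tri3_def by auto
    have njk: "closed_segment j k \<notin> Nedg eps u"
    proof
      assume h: "closed_segment j k \<in> Nedg eps u"
      have "closed_segment j k \<subseteq> T" unfolding T by (rule seg_sub_hull) auto
      then have "closed_segment j k \<in> E" unfolding E_def using h by simp
      then have "closed_segment j k = closed_segment i j" using E0 ij(1) by simp
      then have "{j,k} = {i,j}" by simp
      then show False using kij ij(4) by (metis doubleton_eq_iff)
    qed
    have nik: "closed_segment i k \<notin> Nedg eps u"
    proof
      assume h: "closed_segment i k \<in> Nedg eps u"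
      have "closed_segment i k \<subseteq> T" unfolding T by (rule seg_sub_hull) auto
      then have "closed_segment i k \<in> E" unfolding E_def using h by simp
      then have "closed_segment i k = closed_segment i j" using E0 ij(1) by simp
      then have "{i,k} = {i,j}" by simp
      then show False using kij ij(4) by (metis doubleton_eq_iff)
    qed
    have "u k \<noteq> u i"
    proof
      assume h: "u k = u i"
      then have "u j = - u k" using ij(5) by (metis minus_minus)
      then have "closed_segment j k \<in> Nedg eps u" unfolding Nedg_def using lat by blast
      then show False using njk by simp
    qed
    moreover have "u k \<noteq> u j"
    proof
      assume h: "u k = u j"
      then have "u i = - u k" using ij(5) by simp
      then have "closed_segment i k \<in> Nedg eps u" unfolding Nedg_def using lat by blast
      then show False using nik by simp
    qed
    ultimately show ?thesis using T t3 ij(5) njk nik by blast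
  qed
  have A: "\<exists>e. bdry_edge eps u R e \<and> e \<subseteq> T" if c1: "card E = 1"
  proof (rule ccontr)
    assume no: "\<not> (\<exists>e. bdry_edge eps u R e \<and> e \<subseteq> T)"
    obtain a b c where abc: "T = convex hull {a,b,c}" "tri3 eps a b c" "u a = - u b" "u c \<noteq> u a" "u c \<noteq> u b"
      "closed_segment b c \<notin> Nedg eps u" "closed_segment a c \<notin> Nedg eps u" using key[OF c1] by blast
    have "convex hull {b,c,b+c-a} \<in> S"
      using bdry[OF e abc(2,1,6) St R assms(7)] no by blast
    moreover have "convex hull {a,c,a+c-b} \<in> S"
    proof -
      have "T = convex hull {b,a,c}" using abc(1) by (simp add: insert_commute)
      then show ?thesis using bdry[OF e tri3_swap12[OF abc(2)] _ abc(7) St R assms(7)] no by blast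
    qed
    ultimately show False using core[OF e assms(4) abc(2,3,4,5) pw] TS abc(1) by blast
  qed
  have B: "\<exists>e1 e2. e1 \<noteq> e2 \<and> bdry_edge eps u R e1 \<and> e1 \<subseteq> T \<and> bdry_edge eps u R e2 \<and> e2 \<subseteq> T"
    if c1: "card E = 1" and c4: "card (u ` (lat eps \<inter> R)) = 4"
  proof -
    obtain a b c where abc: "T = convex hull {a,b,c}" "tri3 eps a b c" "u a = - u b" "u c \<noteq> u a" "u c \<noteq> u b"
      "closed_segment b c \<notin> Nedg eps u" "closed_segment a c \<notin> Nedg eps u" using key[OF c1] by blast
    have TS': "convex hull {a,b,c} \<in> S" using TS abc(1) by simp
    have Tba: "T = convex hull {b,a,c}" using abc(1) by (simp add: insert_commute)
    have TS'': "convex hull {b,a,c} \<in> S" using TS Tba by simp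
    have nT2: "convex hull {b,c,b+c-a} \<notin> S"
    proof
      assume h: "convex hull {b,c,b+c-a} \<in> S"
      have "u ` (lat eps \<inter> \<Union>S) \<subseteq> {u a, u b, u c}" using core[OF e assms(4) abc(2,3,4,5) pw TS'] h by blast
      then have "card (u ` (lat eps \<inter> R)) \<le> card {u a, u b, u c}" unfolding R by (intro card_mono) auto
      then show False using c4 card3[of "u a" "u b" "u c"] by simp
    qed
    have nT3: "convex hull {a,c,a+c-b} \<notin> S"
    proof
      assume h: "convex hull {a,c,a+c-b} \<in> S"
      have ba: "u b = - u a" using abc(3) by simp
      have "u ` (lat eps \<inter> \<Union>S) \<subseteq> {u b, u a, u c}"
        using core[OF e assms(4) tri3_swap12[OF abc(2)] ba abc(5) abc(4) pw TS''] h by blast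
      then have "card (u ` (lat eps \<inter> R)) \<le> card {u b, u a, u c}" unfolding R by (intro card_mono) auto
      then show False using c4 card3[of "u b" "u a" "u c"] by simp
    qed
    have b1: "bdry_edge eps u R (closed_segment b c) \<and> closed_segment b c \<subseteq> T"
      using bdry[OF e abc(2,1,6) St R assms(7) nT2] .
    have b2: "bdry_edge eps u R (closed_segment a c) \<and> closed_segment a c \<subseteq> T"
      using bdry[OF e tri3_swap12[OF abc(2)] Tba abc(7) St R assms(7) nT3] .
    have "closed_segment b c \<noteq> closed_segment a c"
    proof
      assume "closed_segment b c = closed_segment a c"
      then have "{b,c} = {a,c}" by simp
      then show False using tri3_distinct[OF e abc(2)] by (metis doubleton_eq_iff)
    qed
    then show ?thesis using b1 b2 by blast
  qed
  show ?thesis using A B unfolding E_def by blast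
qed


end
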